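(* Let $S$ be a formula. Then $\mathbb{C}[D]\otimes S$, with the extended products and the operator $D$, satisfies the half Jacobi identity (i.e. is a VLA-SS) if and only if for all homogeneous $u,v,w\in S$ and all $m,n\in\mathbb{N}$ one has, in $\mathbb{C}[D]\otimes S$, $$u_m(v_nw)-\varepsilon_{u,v}v_n(u_mw)=\sum_{i\ge0}\binom{m}{i}(u_iv)_{m+n-i}w .$$
   Context: All spaces over $\mathbb{C}$; $\mathbb{N}=\{0,1,2,\dots\}$; $\varepsilon_{u,v}=(-1)^{|u||v|}$. A formula is a $\mathbb{Z}_2$-graded space $S$ with parity-preserving linear maps $F_n:S\otimes S\to\mathbb{C}[D]\otimes S$ ($n\in\mathbb{N}$; $\mathbb{C}[D]$ even) with $F_n(u,v)=0$ for $n$ large; write $u_nv=F_n(u,v)$, identify $S=1\otimes S$, $D(D^k\otimes u)=D^{k+1}\otimes u$. The products extend uniquely to bilinear products $A_nB$ ($n\in\mathbb{N}$) on $\mathbb{C}[D]\otimes S$ with $(DA)_nB=-nA_{n-1}B$ and $D(A_nB)=(DA)_nB+A_n(DB)$; explicitly $\sum_{n\ge0}(P(D)u)_n(Q(D)v)z^{-n-1}=P(\frac{d}{dz})Q(D-\frac{d}{dz})\sum_{n\ge0}(u_nv)z^{-n-1}$. A VLA-SS is a $\mathbb{Z}_2$-graded space $U$ with an even operator $D$ and bilinear products $u_nv$ ($n\in\mathbb{N}$) such that for homogeneous $u,v,w$: $u_nv=0$ for $n$ large; $|u_nv|=|u|+|v|$; $(Du)_nv=-nu_{n-1}v$ and $D(u_nv)=(Du)_nv+u_n(Dv)$;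 and the half Jacobi identity: for all $k,m,n\in\mathbb{N}$, $\sum_{i\ge0}(-1)^i\binom{k}{i}(u_{m+k-i}(v_{n+i}w)-\varepsilon_{u,v}(-1)^kv_{n+k-i}(u_{m+i}w))=\sum_{i\ge0}\binom{m}{i}(u_{k+i}v)_{m+n-i}w$. *)

theory Defs
  imports Complex_Main "HOL-Library.Function_Algebras"
begin

text \<open>Parity is encoded by bool: False = even, True = odd.
  The sign epsilon_{u,v} = (-1)^{|u||v|}.\<close>

definition eps :: "bool \<Rightarrow> bool \<Rightarrow> complex" where
  "eps p q = (if p \<and> q then -1 else 1)"

definition graded_space ::
  "(complex \<Rightarrow> 'b::ab_group_add \<Rightarrow> 'b) \<Rightarrow> 'b set \<Rightarrow> (bool \<Rightarrow> 'b set) \<Rightarrow> bool" where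
  "graded_space sc U Upar \<longleftrightarrow>
     vector_space sc \<and> module.subspace sc U \<and>
     (\<forall>p. module.subspace sc (Upar p) \<and> Upar p \<subseteq> U) \<and>
     Upar False \<inter> Upar True = {0} \<and>
     (\<forall>x\<in>U. \<exists>a\<in>Upar False. \<exists>b\<in>Upar True. x = a + b)"

definition VLA_SS ::
  "(complex \<Rightarrow> 'b::ab_group_add \<Rightarrow> 'b) \<Rightarrow> 'b set \<Rightarrow> (bool \<Rightarrow> 'b set) \<Rightarrow>
   ('b \<Rightarrow> 'b) \<Rightarrow> ('b \<Rightarrow> nat \<Rightarrow> 'b \<Rightarrow> 'b) \<Rightarrow> bool" where
  "VLA_SS sc U Upar D pr \<longleftrightarrow>
     graded_space sc U Upar \<and>
     \<comment> \<open>D is an even linear operator on U\<close>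
     (\<forall>x\<in>U. \<forall>y\<in>U. D (x + y) = D x + D y) \<and>
     (\<forall>c. \<forall>x\<in>U. D (sc c x) = sc c (D x)) \<and>
     (\<forall>p. \<forall>x\<in>Upar p. D x \<in> Upar p) \<and>
     \<comment> \<open>the products are bilinear maps U x U -> U\<close>
     (\<forall>n. \<forall>x\<in>U. \<forall>y\<in>U. pr x n y \<in> U) \<and>
     (\<forall>n. \<forall>x\<in>U. \<forall>x'\<in>U. \<forall>y\<in>U. pr (x + x') n y = pr x n y + pr x' n y) \<and>
     (\<forall>n. \<forall>x\<in>U. \<forall>y\<in>U. \<forall>y'\<in>U. pr x n (y + y') = pr x n y + pr x n y') \<and>
     (\<forall>n c. \<forall>x\<in>U. \<forall>y\<in>U. pr (sc c x) n y = sc c (pr x n y)) \<and>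
     (\<forall>n c. \<forall>x\<in>U. \<forall>y\<in>U. pr x n (sc c y) = sc c (pr x n y)) \<and>
     \<comment> \<open>axioms for homogeneous elements\<close>
     (\<forall>p q r. \<forall>u\<in>Upar p. \<forall>v\<in>Upar q. \<forall>w\<in>Upar r.
        (\<exists>N. \<forall>n\<ge>N. pr u n v = 0) \<and>
        (\<forall>n. pr u n v \<in> Upar (p \<noteq> q)) \<and>
        (\<forall>n. pr (D u) n v = sc (- of_nat n) (pr u (n - 1) v)) \<and>
        (\<forall>n. D (pr u n v) = pr (D u) n v + pr u n (D v)) \<and>
        (\<forall>k m n.
           (\<Sum>i\<le>k. sc ((-1) ^ i * of_nat (k choose i))
              (pr u (m + k - i) (pr v (n + i) w)
               - sc (eps p q * (-1) ^ k) (pr v (n + k - i) (pr u (m + i) w))))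
           = (\<Sum>i\<le>m. sc (of_nat (m choose i)) (pr (pr u (k + i) v) (m + n - i) w))))"

text \<open>The space C[D] (x) S is modelled as finitely supported sequences f :: nat => 'a,
  where f k is the coefficient of D^k.\<close>

definition CDS :: "(nat \<Rightarrow> 'a::zero) set" where
  "CDS = {f. finite {k. f k \<noteq> 0}}"

definition CDpar :: "(bool \<Rightarrow> 'a::zero set) \<Rightarrow> bool \<Rightarrow> (nat \<Rightarrow> 'a) set" where
  "CDpar Spar p = {f \<in> CDS. \<forall>k. f k \<in> Spar p}"

definition Dsh :: "(nat \<Rightarrow> 'a::zero) \<Rightarrow> nat \<Rightarrow> 'a" where
  "Dsh f = (\<lambda>j. if j = 0 then 0 else f (j - 1))"

definition Dpow :: "nat \<Rightarrow> (nat \<Rightarrow> 'a::zero) \<Rightarrow> nat \<Rightarrow> 'a" where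
  "Dpow k f = (\<lambda>j. if k \<le> j then f (j - k) else 0)"

definition incl :: "'a::zero \<Rightarrow> nat \<Rightarrow> 'a" where
  "incl u = (\<lambda>j. if j = 0 then u else 0)"

definition fscale :: "(complex \<Rightarrow> 'a \<Rightarrow> 'a) \<Rightarrow> complex \<Rightarrow> (nat \<Rightarrow> 'a) \<Rightarrow> nat \<Rightarrow> 'a" where
  "fscale sc c f = (\<lambda>j. sc c (f j))"

definition is_formula ::
  "(complex \<Rightarrow> 'a::ab_group_add \<Rightarrow> 'a) \<Rightarrow> (bool \<Rightarrow> 'a set) \<Rightarrow>
   (nat \<Rightarrow> 'a \<Rightarrow> 'a \<Rightarrow> nat \<Rightarrow> 'a) \<Rightarrow> bool" where
  "is_formula sc Spar F \<longleftrightarrow>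
     graded_space sc UNIV Spar \<and>
     (\<forall>n u v. F n u v \<in> CDS) \<and>
     (\<forall>n u u' v. F n (u + u') v = F n u v + F n u' v) \<and>
     (\<forall>n u v v'. F n u (v + v') = F n u v + F n u v') \<and>
     (\<forall>n c u v. F n (sc c u) v = fscale sc c (F n u v)) \<and>
     (\<forall>n c u v. F n u (sc c v) = fscale sc c (F n u v)) \<and>
     (\<forall>p q n. \<forall>u\<in>Spar p. \<forall>v\<in>Spar q. F n u v \<in> CDpar Spar (p \<noteq> q)) \<and>
     (\<forall>u v. \<exists>N. \<forall>n\<ge>N. F n u v = 0)"

text \<open>(D^a u)_n (D^b v): coefficient of z^{-n-1} in
  (d/dz)^a (D - d/dz)^b sum_j (u_j v) z^{-j-1}, i.e.
  sum_s (-1)^a (b choose s) (a+s)! (n choose a+s) D^{b-s} (u_{n-a-s} v).\<close>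

definition ext_basic ::
  "(complex \<Rightarrow> 'a::ab_group_add \<Rightarrow> 'a) \<Rightarrow> (nat \<Rightarrow> 'a \<Rightarrow> 'a \<Rightarrow> nat \<Rightarrow> 'a) \<Rightarrow>
   nat \<Rightarrow> 'a \<Rightarrow> nat \<Rightarrow> nat \<Rightarrow> 'a \<Rightarrow> nat \<Rightarrow> 'a" where
  "ext_basic sc F a u n b v =
     (\<Sum>s\<le>b. if a + s \<le> n then
        fscale sc ((-1) ^ a * of_nat (b choose s) * fact (a + s) * of_nat (n choose (a + s)))
          (Dpow (b - s) (F (n - a - s) u v))
      else 0)"

definition ext_prod ::
  "(complex \<Rightarrow> 'a::ab_group_add \<Rightarrow> 'a) \<Rightarrow> (nat \<Rightarrow> 'a \<Rightarrow> 'a \<Rightarrow> nat \<Rightarrow> 'a) \<Rightarrow>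
   (nat \<Rightarrow> 'a) \<Rightarrow> nat \<Rightarrow> (nat \<Rightarrow> 'a) \<Rightarrow> nat \<Rightarrow> 'a" where
  "ext_prod sc F A n B =
     (\<Sum>a\<in>{a. A a \<noteq> 0}. \<Sum>b\<in>{b. B b \<noteq> 0}. ext_basic sc F a (A a) n b (B b))"

end

theory Submission
  imports Defs
begin

lemma sum_fun_apply: "(\<Sum>x\<in>A. f x) (j::nat) = (\<Sum>x\<in>A. f x j)"
  by (induction A rule: infinite_finite_induct) auto

lemma Dsh_apply: "Dsh f j = (if j = 0 then 0 else f (j - 1))" by (simp add: Dsh_def)
lemma Dsh_add[simp]: "Dsh (f + (g::nat\<Rightarrow>'a::ab_group_add)) = Dsh f + Dsh g" by (simp add: Dsh_def fun_eq_iff)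
lemma Dsh_diff[simp]: "Dsh (f - (g::nat\<Rightarrow>'a::ab_group_add)) = Dsh f - Dsh g" by (simp add: Dsh_def fun_eq_iff)
lemma Dsh_zero[simp]: "Dsh 0 = 0" by (simp add: Dsh_def fun_eq_iff)
lemma Dsh_sum: "Dsh (\<Sum>x\<in>A. (f x :: nat \<Rightarrow> 'a::ab_group_add)) = (\<Sum>x\<in>A. Dsh (f x))"
proof (induction A rule: infinite_finite_induct)
  case (infinite A)
  show ?case by (simp only: sum.infinite[OF infinite] Dsh_zero)
next
  case empty
  then show ?case by (simp only: sum.empty Dsh_zero)
next
  case (insert x F)
  show ?case by (simp only: sum.insert[OF insert(1,2)] Dsh_add insert(3))
qed

lemma Dpow_add[simp]: "Dpow k (f + (g::nat\<Rightarrow>'a::ab_group_add)) = Dpow k f + Dpow k g" by (simp add: Dpow_def fun_eq_iff)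
lemma Dpow_zero[simp]: "Dpow k 0 = 0" by (simp add: Dpow_def fun_eq_iff)
lemma Dpow_0[simp]: "Dpow 0 f = f" by (simp add: Dpow_def)
lemma Dpow_Suc: "Dpow (Suc k) f = Dsh (Dpow k f)"
  by (auto simp add: Dpow_def Dsh_def fun_eq_iff)
lemma Dpow_incl: "Dpow a (incl u) = (\<lambda>j. if j = a then u else 0)"
  by (auto simp add: Dpow_def incl_def fun_eq_iff)

lemma CDS_add[simp]: "(f::nat\<Rightarrow>'a::ab_group_add) \<in> CDS \<Longrightarrow> g \<in> CDS \<Longrightarrow> f + g \<in> CDS"
  unfolding CDS_def by (auto intro: finite_subset[of _ "{k. f k \<noteq> 0} \<union> {k. g k \<noteq> 0}"])
lemma CDS_minus[simp]: "(f::nat\<Rightarrow>'a::ab_group_add) \<in> CDS \<Longrightarrow> - f \<in> CDS"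
  unfolding CDS_def by auto
lemma CDS_diff[simp]: "(f::nat\<Rightarrow>'a::ab_group_add) \<in> CDS \<Longrightarrow> g \<in> CDS \<Longrightarrow> f - g \<in> CDS"
  using CDS_add[of f "- g"] by simp
lemma CDS_zero[simp]: "0 \<in> CDS" unfolding CDS_def by auto
lemma CDS_sum[simp]: "(\<And>x. x \<in> A \<Longrightarrow> (f x ::nat\<Rightarrow>'a::ab_group_add) \<in> CDS) \<Longrightarrow> (\<Sum>x\<in>A. f x) \<in> CDS"
  by (induction A rule: infinite_finite_induct) auto
lemma CDS_Dsh[simp]: "(f::nat\<Rightarrow>'a::zero) \<in> CDS \<Longrightarrow> Dsh f \<in> CDS"
proof -
  assume "f \<in> CDS"
  then have "finite (Suc ` {k. f k \<noteq> 0})" by (simp add: CDS_def)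
  moreover have "{k. Dsh f k \<noteq> 0} \<subseteq> Suc ` {k. f k \<noteq> 0}"
    by (auto simp: Dsh_def image_iff) (metis Suc_pred)
  ultimately show ?thesis unfolding CDS_def using finite_subset by blast
qed
lemma CDS_Dpow[simp]: "(f::nat\<Rightarrow>'a::zero) \<in> CDS \<Longrightarrow> Dpow k f \<in> CDS"
  by (induction k) (auto simp: Dpow_Suc)
lemma CDS_incl[simp]: "incl u \<in> CDS"
  unfolding CDS_def incl_def by (auto intro: finite_subset[of _ "{0}"])



lemma neg_cancel_aux: "- ((x::'b::ab_group_add) + y) + x = - y"
  by (simp add: algebra_simps)

lemma ab_aux: "(x::'b::ab_group_add) = y + - z \<Longrightarrow> y = z + x"
  by (simp add: algebra_simps)

context vector_space
begin
lemma lin3: "(a1 + m *s a2 + n *s a3) - e *s (b1 + n *s b2 + m *s b3) - (c1 + m *s c2 + n *s c3)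
   = (a1 - e *s b1 - c1) + m *s (a2 - e *s b3 - c2) + n *s (a3 - e *s b2 - c3)"
  by (simp add: algebra_simps scale_left_commute[of e])
lemma lin_add: "(p + p') - e *s (q + q') - (r + r') = (p - e *s q - r) + (p' - e *s q' - r')"
  by (simp add: algebra_simps)
lemma lin_neg: "(c *s a) - e *s (c *s b) - (c *s d) = c *s (a - e *s b - d)"
  by (simp add: algebra_simps scale_left_commute[of e])
end

locale cvs =
  fixes sca :: "complex \<Rightarrow> 'b::ab_group_add \<Rightarrow> 'b" (infixr \<open>\<star>\<close> 75)
  assumes cvs: "vector_space sca"
begin

sublocale W: vector_space sca by (rule cvs)

lemma pascal_gen:
  "(\<Sum>s\<le>Suc b. of_nat (Suc b choose s) \<star> g s) =
   (\<Sum>s\<le>b. of_nat (b choose s) \<star> g s) + (\<Sum>s\<le>b. of_nat (b choose s) \<star> g (Suc s))"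
proof -
  have A: "(\<Sum>s\<le>b. of_nat (b choose s) \<star> g s) = g 0 + (\<Sum>s\<le>b. of_nat (b choose Suc s) \<star> g (Suc s))"
  proof -
    have "(\<Sum>s\<le>b. of_nat (b choose s) \<star> g s) = g 0 + (\<Sum>s<b. of_nat (b choose Suc s) \<star> g (Suc s))"
      unfolding lessThan_Suc_atMost[symmetric] sum.lessThan_Suc_shift by simp
    also have "(\<Sum>s<b. of_nat (b choose Suc s) \<star> g (Suc s)) = (\<Sum>s\<le>b. of_nat (b choose Suc s) \<star> g (Suc s))"
      by (simp add: lessThan_Suc_atMost[symmetric] binomial_eq_0)
    finally show ?thesis .
  qed
  have "(\<Sum>s\<le>Suc b. of_nat (Suc b choose s) \<star> g s) =
     g 0 + (\<Sum>s\<le>b. of_nat (Suc b choose Suc s) \<star> g (Suc s))"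
    by (simp only: sum.atMost_Suc_shift) simp
  also have "\<dots> = (g 0 + (\<Sum>s\<le>b. of_nat (b choose Suc s) \<star> g (Suc s)))
      + (\<Sum>s\<le>b. of_nat (b choose s) \<star> g (Suc s))"
    by (simp add: sum.distrib W.scale_left_distrib algebra_simps)
  finally show ?thesis by (simp only: A)
qed

definition PP :: "(nat \<Rightarrow> nat \<Rightarrow> 'b) \<Rightarrow> nat \<Rightarrow> nat \<Rightarrow> nat \<Rightarrow> 'b" where
  "PP X k m n = (\<Sum>i\<le>k. of_nat (k choose i) \<star> ((-1) ^ i \<star> X (m + k - i) (n + i)))"

lemma PP_Suc: "PP (X :: nat \<Rightarrow> nat \<Rightarrow> 'b) (Suc k) m n = PP X k (Suc m) n - PP X k m (Suc n)"
proof -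
  have "PP X (Suc k) m n = (\<Sum>i\<le>k. of_nat (k choose i) \<star> ((-1) ^ i \<star> X (m + Suc k - i) (n + i)))
     + (\<Sum>i\<le>k. of_nat (k choose i) \<star> ((-1) ^ Suc i \<star> X (m + Suc k - Suc i) (n + Suc i)))"
    unfolding PP_def by (rule pascal_gen)
  also have "(\<Sum>i\<le>k. of_nat (k choose i) \<star> ((-1) ^ i \<star> X (m + Suc k - i) (n + i))) = PP X k (Suc m) n"
    unfolding PP_def by (rule sum.cong) simp_all
  also have "(\<Sum>i\<le>k. of_nat (k choose i) \<star> ((-1) ^ Suc i \<star> X (m + Suc k - Suc i) (n + Suc i))) = - PP X k m (Suc n)"
    unfolding PP_def sum_negf[symmetric] by (rule sum.cong) simp_all
  finally show ?thesis by simp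
qed

definition RR :: "(nat \<Rightarrow> nat \<Rightarrow> 'b) \<Rightarrow> nat \<Rightarrow> nat \<Rightarrow> nat \<Rightarrow> 'b" where
  "RR Z k m n = (\<Sum>i\<le>m. of_nat (m choose i) \<star> Z (k + i) (m + n - i))"

lemma RR_Suc: "RR (Z :: nat \<Rightarrow> nat \<Rightarrow> 'b) (Suc k) m n = RR Z k (Suc m) n - RR Z k m (Suc n)"
proof -
  have "RR Z k (Suc m) n = (\<Sum>i\<le>m. of_nat (m choose i) \<star> Z (k + i) (Suc m + n - i))
     + (\<Sum>i\<le>m. of_nat (m choose i) \<star> Z (k + Suc i) (Suc m + n - Suc i))"
    unfolding RR_def by (rule pascal_gen)
  also have "(\<Sum>i\<le>m. of_nat (m choose i) \<star> Z (k + i) (Suc m + n - i)) = RR Z k m (Suc n)"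
    unfolding RR_def by (rule sum.cong) simp_all
  also have "(\<Sum>i\<le>m. of_nat (m choose i) \<star> Z (k + Suc i) (Suc m + n - Suc i)) = RR Z (Suc k) m n"
    unfolding RR_def by (rule sum.cong) simp_all
  finally show ?thesis by simp
qed

definition LL :: "complex \<Rightarrow> (nat \<Rightarrow> nat \<Rightarrow> 'b) \<Rightarrow> (nat \<Rightarrow> nat \<Rightarrow> 'b) \<Rightarrow> nat \<Rightarrow> nat \<Rightarrow> nat \<Rightarrow> 'b" where
  "LL e X Y k m n = (\<Sum>i\<le>k. ((-1) ^ i * of_nat (k choose i)) \<star>
      (X (m + k - i) (n + i) - (e * (-1) ^ k) \<star> Y (n + k - i) (m + i)))"

lemma LL_PP: "LL e X Y k m n = PP X k m n - (e * (-1) ^ k) \<star> PP Y k n m"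
  unfolding LL_def PP_def
  by (simp add: W.scale_right_diff_distrib sum_subtractf W.scale_sum_right mult_ac add_ac)

lemma LL_Suc: "LL e X Y (Suc k) m n = LL e X Y k (Suc m) n - LL e X Y k m (Suc n)"
  unfolding LL_PP PP_Suc
  by (simp add: algebra_simps)

lemma half_jacobi_gen:
  assumes "\<forall>m n. X m n - e \<star> Y n m = RR Z 0 m n"
  shows "LL e X Y k m n = RR Z k m n"
proof (induction k arbitrary: m n)
  case 0
  then show ?case using assms by (simp add: LL_def)
next
  case (Suc k)
  then show ?case by (simp add: LL_Suc RR_Suc)
qed

end

locale fml =
  fixes sc :: "complex \<Rightarrow> 'a::ab_group_add \<Rightarrow> 'a"
    and Spar :: "bool \<Rightarrow> 'a set"
    and F :: "nat \<Rightarrow> 'a \<Rightarrow> 'a \<Rightarrow> nat \<Rightarrow> 'a"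
  assumes fml: "is_formula sc Spar F"
begin

lemma vsS: "vector_space sc"
  using fml by (simp add: is_formula_def graded_space_def)

sublocale S: vector_space sc by (rule vsS)

lemma vsV: "vector_space (fscale sc)"
  unfolding vector_space_def fscale_def
  by (simp add: fun_eq_iff S.scale_right_distrib S.scale_left_distrib)

sublocale V: vector_space "fscale sc" by (rule vsV)
sublocale VV: cvs "fscale sc" by (rule cvs.intro) (rule vsV)

lemma Spar_sub: "S.subspace (Spar p)"
  using fml by (simp add: is_formula_def graded_space_def)

lemma Spar0: "0 \<in> Spar p" using Spar_sub unfolding S.subspace_def by simp
lemma Spar_add: "x \<in> Spar p \<Longrightarrow> y \<in> Spar p \<Longrightarrow> x + y \<in> Spar p"
  using Spar_sub unfolding S.subspace_def by simp
lemma Spar_scale: "x \<in> Spar p \<Longrightarrow> sc c x \<in> Spar p"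
  using Spar_sub unfolding S.subspace_def by simp
lemma Spar_int: "Spar False \<inter> Spar True = {0}"
  using fml by (simp add: is_formula_def graded_space_def)
lemma Spar_dec: "\<exists>a\<in>Spar False. \<exists>b\<in>Spar True. x = a + b"
  using fml by (simp add: is_formula_def graded_space_def)

lemma F_CDS: "F n u v \<in> CDS" using fml by (simp add: is_formula_def)
lemma F_add1: "F n (u + u') v = F n u v + F n u' v" using fml by (simp add: is_formula_def)
lemma F_add2: "F n u (v + v') = F n u v + F n u v'" using fml by (simp add: is_formula_def)
lemma F_sc1: "F n (sc c u) v = fscale sc c (F n u v)" using fml by (simp add: is_formula_def)
lemma F_sc2: "F n u (sc c v) = fscale sc c (F n u v)" using fml by (simp add: is_formula_def)
lemma F_par: "u \<in> Spar p \<Longrightarrow> v \<in> Spar q \<Longrightarrow> F n u v \<in> CDpar Spar (p \<noteq> q)"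
  using fml by (simp add: is_formula_def)
lemma F_van: "\<exists>N. \<forall>n\<ge>N. F n u v = 0" using fml by (simp add: is_formula_def)
lemma F_01[simp]: "F n 0 v = 0"
  using F_add1[of n 0 0 v] by simp
lemma F_02[simp]: "F n u 0 = 0"
  using F_add2[of n u 0 0] by simp

lemma fscale_apply: "fscale sc c f j = sc c (f j)" by (simp add: fscale_def)

lemma Dsh_scale[simp]: "Dsh (fscale sc c f) = fscale sc c (Dsh f)" by (simp add: Dsh_def fun_eq_iff fscale_apply)
lemma Dpow_scale[simp]: "Dpow k (fscale sc c f) = fscale sc c (Dpow k f)" by (simp add: Dpow_def fun_eq_iff fscale_apply)
lemma CDS_scale[simp]: "f \<in> CDS \<Longrightarrow> fscale sc c f \<in> CDS"
  unfolding CDS_def by (auto simp: fscale_apply intro: finite_subset[of _ "{k. f k \<noteq> 0}"])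
lemma CDpar_CDS: "f \<in> CDpar Spar p \<Longrightarrow> f \<in> CDS" by (simp add: CDpar_def)
lemma CDpar_add[simp]: "f \<in> CDpar Spar p \<Longrightarrow> g \<in> CDpar Spar p \<Longrightarrow> f + g \<in> CDpar Spar p"
  by (auto simp: CDpar_def Spar_add)
lemma CDpar_zero[simp]: "0 \<in> CDpar Spar p" by (auto simp: CDpar_def Spar0)
lemma CDpar_scale[simp]: "f \<in> CDpar Spar p \<Longrightarrow> fscale sc c f \<in> CDpar Spar p"
  by (auto simp: CDpar_def Spar_scale fscale_apply)
lemma CDpar_sum[simp]: "(\<And>x. x \<in> A \<Longrightarrow> f x \<in> CDpar Spar p) \<Longrightarrow> (\<Sum>x\<in>A. f x) \<in> CDpar Spar p"
  by (induction A rule: infinite_finite_induct) auto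
lemma CDpar_Dsh[simp]: "f \<in> CDpar Spar p \<Longrightarrow> Dsh f \<in> CDpar Spar p"
  unfolding CDpar_def by (auto simp: Dsh_apply Spar0)
lemma CDpar_Dpow[simp]: "f \<in> CDpar Spar p \<Longrightarrow> Dpow k f \<in> CDpar Spar p"
  by (induction k) (auto simp: Dpow_Suc)
lemma CDpar_incl[simp]: "u \<in> Spar p \<Longrightarrow> incl u \<in> CDpar Spar p"
  using CDS_incl[of u] unfolding CDpar_def by (auto simp: incl_def Spar0)
lemma incl_CDpar: "incl u \<in> CDpar Spar p \<Longrightarrow> u \<in> Spar p"
  by (auto simp: CDpar_def incl_def dest: spec[of _ 0])


lemma CDS_scale'[simp]: "f \<in> CDS \<Longrightarrow> fscale sc c f \<in> CDS"
  by (rule CDS_scale)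

definition H :: "nat \<Rightarrow> 'a \<Rightarrow> nat \<Rightarrow> 'a \<Rightarrow> nat \<Rightarrow> nat \<Rightarrow> nat \<Rightarrow> 'a" where
  "H a u n v d s = (if a + s \<le> n then
     fscale sc ((-1) ^ a * fact (a + s) * of_nat (n choose (a + s))) (Dpow d (F (n - a - s) u v))
     else 0)"

lemma eb_H: "ext_basic sc F a u n b v = (\<Sum>s\<le>b. fscale sc (of_nat (b choose s)) (H a u n v (b - s) s))"
  unfolding ext_basic_def H_def
  by (rule sum.cong) (auto simp: V.scale_scale mult_ac)

lemma H_Dsh: "H a u n v (Suc d) s = Dsh (H a u n v d s)"
  unfolding H_def by (simp add: Dpow_Suc)

lemma nat_fact_binom: "fact (Suc k) * (Suc n choose Suc k) = Suc n * (fact k * (n choose k))"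
proof -
  have "Suc n * (n choose k) = (Suc n choose Suc k) * Suc k" by (rule Suc_times_binomial_eq)
  then show ?thesis by (simp add: algebra_simps)
qed

lemma cplx_fact_binom: "(fact (Suc k) :: complex) * of_nat (Suc n choose Suc k) = of_nat (Suc n) * (fact k * of_nat (n choose k))"
proof -
  have "(of_nat (fact (Suc k) * (Suc n choose Suc k)) :: complex) = of_nat (Suc n * (fact k * (n choose k)))"
    by (simp only: nat_fact_binom)
  then show ?thesis by (simp only: of_nat_mult of_nat_fact)
qed

lemma H_Suc_a: "H (Suc a) u n v d s = fscale sc (- of_nat n) (H a u (n - 1) v d s)"
proof (cases n)
  case 0
  then show ?thesis by (simp add: H_def)
next
  case (Suc n')
  show ?thesis
  proof (cases "a + s \<le> n'")
    case True
    have c: "(fact (Suc a + s)::complex) * of_nat (Suc n' choose (Suc a + s)) = of_nat (Suc n') * (fact (a + s) * of_nat (n' choose (a + s)))"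
      by (simp only: add_Suc cplx_fact_binom)
    have "((-1) ^ Suc a * fact (Suc a + s) * of_nat (Suc n' choose (Suc a + s)) :: complex)
        = - of_nat (Suc n') * ((-1) ^ a * fact (a + s) * of_nat (n' choose (a + s)))"
      by (simp only: mult.assoc c) (simp add: algebra_simps)
    then show ?thesis using True Suc by (simp add: H_def V.scale_scale)
  next
    case False
    then show ?thesis using Suc by (simp add: H_def)
  qed
qed

lemma H_Suc_s: "H a u n v d (Suc s) = - H (Suc a) u n v d s"
proof (cases "Suc a + s \<le> n")
  case True
  have "((-1) ^ Suc a * fact (Suc a + s) * of_nat (n choose (Suc a + s)) :: complex)
      = - ((-1) ^ a * fact (a + Suc s) * of_nat (n choose (a + Suc s)))" by simp
  then show ?thesis using True by (simp add: H_def V.scale_minus_left[symmetric] del: V.scale_minus_left)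
next
  case False
  then show ?thesis by (simp add: H_def)
qed

lemma pascal_sum:
  "(\<Sum>s\<le>Suc b. fscale sc (of_nat (Suc b choose s)) (g s)) =
   (\<Sum>s\<le>b. fscale sc (of_nat (b choose s)) (g s)) + (\<Sum>s\<le>b. fscale sc (of_nat (b choose s)) (g (Suc s)))"
proof -
  have A: "(\<Sum>s\<le>b. fscale sc (of_nat (b choose s)) (g s)) = g 0 + (\<Sum>s\<le>b. fscale sc (of_nat (b choose Suc s)) (g (Suc s)))"
  proof -
    have "(\<Sum>s\<le>b. fscale sc (of_nat (b choose s)) (g s)) = g 0 + (\<Sum>s<b. fscale sc (of_nat (b choose Suc s)) (g (Suc s)))"
      unfolding lessThan_Suc_atMost[symmetric] sum.lessThan_Suc_shift by simp
    also have "(\<Sum>s<b. fscale sc (of_nat (b choose Suc s)) (g (Suc s))) = (\<Sum>s\<le>b. fscale sc (of_nat (b choose Suc s)) (g (Suc s)))"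
      by (simp add: lessThan_Suc_atMost[symmetric])
    finally show ?thesis .
  qed
  have "(\<Sum>s\<le>Suc b. fscale sc (of_nat (Suc b choose s)) (g s)) =
     g 0 + (\<Sum>s\<le>b. fscale sc (of_nat (Suc b choose Suc s)) (g (Suc s)))"
    by (simp only: sum.atMost_Suc_shift) simp
  also have "\<dots> = (g 0 + (\<Sum>s\<le>b. fscale sc (of_nat (b choose Suc s)) (g (Suc s))))
      + (\<Sum>s\<le>b. fscale sc (of_nat (b choose s)) (g (Suc s)))"
    by (simp add: sum.distrib V.scale_left_distrib algebra_simps)
  finally show ?thesis by (simp only: A)
qed

lemma E0: "ext_basic sc F 0 u n 0 v = F n u v"
  by (simp add: ext_basic_def)

lemma E1: "ext_basic sc F (Suc a) u n b v = fscale sc (- of_nat n) (ext_basic sc F a u (n - 1) b v)"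
  by (simp add: eb_H H_Suc_a V.scale_sum_right V.scale_left_commute[of _ "- of_nat n"]) (simp add: mult.commute)

lemma E2: "Dsh (ext_basic sc F a u n b v) = ext_basic sc F (Suc a) u n b v + ext_basic sc F a u n (Suc b) v"
proof -
  have "ext_basic sc F a u n (Suc b) v = (\<Sum>s\<le>Suc b. fscale sc (of_nat (Suc b choose s)) (H a u n v (Suc b - s) s))"
    by (rule eb_H)
  also have "\<dots> = (\<Sum>s\<le>b. fscale sc (of_nat (b choose s)) (H a u n v (Suc b - s) s))
     + (\<Sum>s\<le>b. fscale sc (of_nat (b choose s)) (H a u n v (Suc b - Suc s) (Suc s)))"
    by (rule pascal_sum)
  also have "(\<Sum>s\<le>b. fscale sc (of_nat (b choose s)) (H a u n v (Suc b - s) s)) = Dsh (ext_basic sc F a u n b v)"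
    unfolding eb_H Dsh_sum
    by (rule sum.cong) (auto simp: Suc_diff_le H_Dsh)
  also have "(\<Sum>s\<le>b. fscale sc (of_nat (b choose s)) (H a u n v (Suc b - Suc s) (Suc s))) = - ext_basic sc F (Suc a) u n b v"
    unfolding eb_H sum_negf[symmetric]
    by (rule sum.cong) (auto simp: H_Suc_s)
  finally show ?thesis by (rule ab_aux)
qed


lemma eb_0u[simp]: "ext_basic sc F a 0 n b v = 0"
  unfolding ext_basic_def by (simp only: F_01 Dpow_zero V.scale_zero_right if_cancel) simp
lemma eb_0v[simp]: "ext_basic sc F a u n b 0 = 0"
  unfolding ext_basic_def by (simp only: F_02 Dpow_zero V.scale_zero_right if_cancel) simp
lemma eb_add_u: "ext_basic sc F a (u + u') n b v = ext_basic sc F a u n b v + ext_basic sc F a u' n b v"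
  unfolding ext_basic_def sum.distrib[symmetric]
  by (rule sum.cong) (auto simp: F_add1 V.scale_right_distrib)
lemma eb_add_v: "ext_basic sc F a u n b (v + v') = ext_basic sc F a u n b v + ext_basic sc F a u n b v'"
  unfolding ext_basic_def sum.distrib[symmetric]
  by (rule sum.cong) (auto simp: F_add2 V.scale_right_distrib)
lemma eb_sc_u: "ext_basic sc F a (sc c u) n b v = fscale sc c (ext_basic sc F a u n b v)"
  unfolding ext_basic_def V.scale_sum_right
  by (rule sum.cong) (auto simp: F_sc1 V.scale_left_commute[of c])
lemma eb_sc_v: "ext_basic sc F a u n b (sc c v) = fscale sc c (ext_basic sc F a u n b v)"
  unfolding ext_basic_def V.scale_sum_right
  by (rule sum.cong) (auto simp: F_sc2 V.scale_left_commute[of c])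
lemma eb_CDS[simp]: "ext_basic sc F a u n b v \<in> CDS"
  unfolding ext_basic_def by (auto intro!: CDS_sum simp: F_CDS)
lemma eb_par: "u \<in> Spar p \<Longrightarrow> v \<in> Spar q \<Longrightarrow> ext_basic sc F a u n b v \<in> CDpar Spar (p \<noteq> q)"
  unfolding ext_basic_def
  by (intro CDpar_sum, split if_split, intro conjI impI CDpar_scale CDpar_Dpow F_par CDpar_zero)
lemma eb_van: "eventually (\<lambda>n. ext_basic sc F a u n b v = 0) sequentially"
proof -
  obtain N where N: "\<forall>n\<ge>N. F n u v = 0" using F_van by blast
  have "\<forall>n\<ge>N + a + b. ext_basic sc F a u n b v = 0"
  proof (intro allI impI)
    fix n assume n: "N + a + b \<le> n"
    show "ext_basic sc F a u n b v = 0"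
      unfolding ext_basic_def
    proof (rule sum.neutral, intro ballI)
      fix s assume "s \<in> {..b}"
      then have "N \<le> n - a - s" using n by auto
      then show "(if a + s \<le> n then fscale sc ((-1) ^ a * of_nat (b choose s) * fact (a + s) * of_nat (n choose (a + s)))
          (Dpow (b - s) (F (n - a - s) u v)) else 0) = 0" using N by simp
    qed
  qed
  then show ?thesis unfolding eventually_sequentially by blast
qed

abbreviation supp :: "(nat \<Rightarrow> 'a) \<Rightarrow> nat set" where "supp f \<equiv> {k. f k \<noteq> 0}"

lemma CDS_fin: "f \<in> CDS \<Longrightarrow> finite (supp f)" by (simp add: CDS_def)

lemma pr_sum: "finite T \<Longrightarrow> finite T' \<Longrightarrow> supp A \<subseteq> T \<Longrightarrow> supp B \<subseteq> T' \<Longrightarrow>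
   ext_prod sc F A n B = (\<Sum>a\<in>T. \<Sum>b\<in>T'. ext_basic sc F a (A a) n b (B b))"
proof -
  assume T: "finite T" "finite T'" "supp A \<subseteq> T" "supp B \<subseteq> T'"
  have "ext_prod sc F A n B = (\<Sum>a\<in>T. \<Sum>b\<in>supp B. ext_basic sc F a (A a) n b (B b))"
    unfolding ext_prod_def by (rule sum.mono_neutral_left) (use T in auto)
  also have "\<dots> = (\<Sum>a\<in>T. \<Sum>b\<in>T'. ext_basic sc F a (A a) n b (B b))"
    by (rule sum.cong[OF refl], rule sum.mono_neutral_left) (use T in auto)
  finally show ?thesis .
qed

lemma pr_CDS[simp]: "ext_prod sc F A n B \<in> CDS"
  unfolding ext_prod_def by (auto intro!: CDS_sum)

lemma pr_par: "A \<in> CDpar Spar p \<Longrightarrow> B \<in> CDpar Spar q \<Longrightarrow> ext_prod sc F A n B \<in> CDpar Spar (p \<noteq> q)"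
  unfolding ext_prod_def by (intro CDpar_sum eb_par) (auto simp: CDpar_def)

lemma pr_van: "A \<in> CDS \<Longrightarrow> B \<in> CDS \<Longrightarrow> \<exists>N. \<forall>n\<ge>N. ext_prod sc F A n B = 0"
proof -
  assume AB: "A \<in> CDS" "B \<in> CDS"
  have "eventually (\<lambda>n. \<forall>a\<in>supp A. \<forall>b\<in>supp B. ext_basic sc F a (A a) n b (B b) = 0) sequentially"
    apply (rule eventually_ball_finite[OF CDS_fin[OF AB(1)]])
    apply (rule ballI)
    apply (rule eventually_ball_finite[OF CDS_fin[OF AB(2)]])
    using eb_van by auto
  then have "eventually (\<lambda>n. ext_prod sc F A n B = 0) sequentially"
    by (rule eventually_mono) (simp add: ext_prod_def)
  then show ?thesis unfolding eventually_sequentially .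
qed

lemma pr_add_l: "A \<in> CDS \<Longrightarrow> A' \<in> CDS \<Longrightarrow> B \<in> CDS \<Longrightarrow>
  ext_prod sc F (A + A') n B = ext_prod sc F A n B + ext_prod sc F A' n B"
proof -
  assume h: "A \<in> CDS" "A' \<in> CDS" "B \<in> CDS"
  let ?T = "supp A \<union> supp A'"
  have fin: "finite ?T" "finite (supp B)" using h by (auto simp: CDS_fin)
  have s: "supp (A + A') \<subseteq> ?T" "supp A \<subseteq> ?T" "supp A' \<subseteq> ?T" by auto
  show ?thesis
    by (simp add: pr_sum[OF fin s(1) order_refl] pr_sum[OF fin s(2) order_refl]
        pr_sum[OF fin s(3) order_refl] eb_add_u sum.distrib)
qed

lemma pr_add_r: "A \<in> CDS \<Longrightarrow> B \<in> CDS \<Longrightarrow> B' \<in> CDS \<Longrightarrow>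
  ext_prod sc F A n (B + B') = ext_prod sc F A n B + ext_prod sc F A n B'"
proof -
  assume h: "A \<in> CDS" "B \<in> CDS" "B' \<in> CDS"
  let ?T = "supp B \<union> supp B'"
  have fin: "finite (supp A)" "finite ?T" using h by (auto simp: CDS_fin)
  have s: "supp (B + B') \<subseteq> ?T" "supp B \<subseteq> ?T" "supp B' \<subseteq> ?T" by auto
  show ?thesis
    by (simp add: pr_sum[OF fin order_refl s(1)] pr_sum[OF fin order_refl s(2)]
        pr_sum[OF fin order_refl s(3)] eb_add_v sum.distrib)
qed

lemma pr_sc_l: "A \<in> CDS \<Longrightarrow> B \<in> CDS \<Longrightarrow>
  ext_prod sc F (fscale sc c A) n B = fscale sc c (ext_prod sc F A n B)"
proof -
  assume h: "A \<in> CDS" "B \<in> CDS"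
  have fin: "finite (supp A)" "finite (supp B)" using h by (auto simp: CDS_fin)
  have s: "supp (fscale sc c A) \<subseteq> supp A" by (auto simp: fscale_apply)
  show ?thesis
    by (simp add: pr_sum[OF fin s order_refl] pr_sum[OF fin order_refl order_refl]
        fscale_apply eb_sc_u V.scale_sum_right)
qed

lemma pr_sc_r: "A \<in> CDS \<Longrightarrow> B \<in> CDS \<Longrightarrow>
  ext_prod sc F A n (fscale sc c B) = fscale sc c (ext_prod sc F A n B)"
proof -
  assume h: "A \<in> CDS" "B \<in> CDS"
  have fin: "finite (supp A)" "finite (supp B)" using h by (auto simp: CDS_fin)
  have s: "supp (fscale sc c B) \<subseteq> supp B" by (auto simp: fscale_apply)
  show ?thesis
    by (simp add: pr_sum[OF fin order_refl s] pr_sum[OF fin order_refl order_refl]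
        fscale_apply eb_sc_v V.scale_sum_right)
qed

lemma pr_DshA: "A \<in> CDS \<Longrightarrow> B \<in> CDS \<Longrightarrow>
  ext_prod sc F (Dsh A) n B = (\<Sum>a\<in>supp A. \<Sum>b\<in>supp B. ext_basic sc F (Suc a) (A a) n b (B b))"
proof -
  assume h: "A \<in> CDS" "B \<in> CDS"
  have fin: "finite (Suc ` supp A)" "finite (supp B)" using h by (auto simp: CDS_fin)
  have s: "supp (Dsh A) \<subseteq> Suc ` supp A"
    by (auto simp: Dsh_apply image_iff) (metis Suc_pred)
  show ?thesis
    by (simp add: pr_sum[OF fin s order_refl] sum.reindex Dsh_apply)
qed

lemma pr_DshB: "A \<in> CDS \<Longrightarrow> B \<in> CDS \<Longrightarrow>
  ext_prod sc F A n (Dsh B) = (\<Sum>a\<in>supp A. \<Sum>b\<in>supp B. ext_basic sc F a (A a) n (Suc b) (B b))"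
proof -
  assume h: "A \<in> CDS" "B \<in> CDS"
  have fin: "finite (supp A)" "finite (Suc ` supp B)" using h by (auto simp: CDS_fin)
  have s: "supp (Dsh B) \<subseteq> Suc ` supp B"
    by (auto simp: Dsh_apply image_iff) (metis Suc_pred)
  show ?thesis
    by (simp add: pr_sum[OF fin order_refl s] sum.reindex Dsh_apply)
qed

lemma pr_Dl: "A \<in> CDS \<Longrightarrow> B \<in> CDS \<Longrightarrow>
  ext_prod sc F (Dsh A) n B = fscale sc (- of_nat n) (ext_prod sc F A (n - 1) B)"
proof -
  assume h: "A \<in> CDS" "B \<in> CDS"
  have fin: "finite (supp A)" "finite (supp B)" using h by (auto simp: CDS_fin)
  show ?thesis
    by (simp add: pr_DshA[OF h] pr_sum[OF fin order_refl order_refl] E1 V.scale_sum_right)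
qed

lemma pr_Leib: "A \<in> CDS \<Longrightarrow> B \<in> CDS \<Longrightarrow>
  Dsh (ext_prod sc F A n B) = ext_prod sc F (Dsh A) n B + ext_prod sc F A n (Dsh B)"
proof -
  assume h: "A \<in> CDS" "B \<in> CDS"
  have fin: "finite (supp A)" "finite (supp B)" using h by (auto simp: CDS_fin)
  show ?thesis
    by (simp add: pr_DshA[OF h] pr_DshB[OF h] pr_sum[OF fin order_refl order_refl] E2 Dsh_sum sum.distrib)
qed

lemma pr_incl: "ext_prod sc F (incl u) n (incl v) = F n u v"
proof -
  have s: "supp (incl u) \<subseteq> {0}" "supp (incl v) \<subseteq> {0}" by (auto simp: incl_def)
  show ?thesis by (simp add: pr_sum[OF _ _ s] E0) (simp add: incl_def)
qed


lemma pr_neg_l: "A \<in> CDS \<Longrightarrow> B \<in> CDS \<Longrightarrow> ext_prod sc F (- A) n B = - ext_prod sc F A n B"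
  using pr_sc_l[of A B "-1" n] by simp
lemma pr_neg_r: "A \<in> CDS \<Longrightarrow> B \<in> CDS \<Longrightarrow> ext_prod sc F A n (- B) = - ext_prod sc F A n B"
  using pr_sc_r[of A B n "-1"] by simp
lemma pr_diff_l: "A \<in> CDS \<Longrightarrow> A' \<in> CDS \<Longrightarrow> B \<in> CDS \<Longrightarrow>
  ext_prod sc F (A - A') n B = ext_prod sc F A n B - ext_prod sc F A' n B"
  using pr_add_l[of A "- A'" B n] pr_neg_l[of A' B n] by simp
lemma pr_diff_r: "A \<in> CDS \<Longrightarrow> B \<in> CDS \<Longrightarrow> B' \<in> CDS \<Longrightarrow>
  ext_prod sc F A n (B - B') = ext_prod sc F A n B - ext_prod sc F A n B'"
  using pr_add_r[of A B "- B'" n] pr_neg_r[of A B' n] by simp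
lemma pr_zero_l[simp]: "ext_prod sc F 0 n B = 0" by (simp add: ext_prod_def)
lemma pr_zero_r[simp]: "ext_prod sc F A n 0 = 0" by (simp add: ext_prod_def)

abbreviation pr where "pr \<equiv> ext_prod sc F"
abbreviation sm where "sm \<equiv> fscale sc"

definition J :: "complex \<Rightarrow> (nat \<Rightarrow> 'a) \<Rightarrow> (nat \<Rightarrow> 'a) \<Rightarrow> (nat \<Rightarrow> 'a) \<Rightarrow> nat \<Rightarrow> nat \<Rightarrow> nat \<Rightarrow> 'a" where
  "J e A B C m n = pr A m (pr B n C) - sm e (pr B n (pr A m C))
     - (\<Sum>i\<le>m. sm (of_nat (m choose i)) (pr (pr A i B) (m + n - i) C))"

lemma binom_shift:
  "(\<Sum>i\<le>m. sm (of_nat (m choose i) * of_nat i) (G i)) =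
   sm (of_nat m) (\<Sum>j\<le>m - 1. sm (of_nat (m - 1 choose j)) (G (Suc j)))"
proof (cases m)
  case 0
  then show ?thesis by simp
next
  case (Suc m')
  have "(\<Sum>i\<le>m. sm (of_nat (m choose i) * of_nat i) (G i)) =
      (\<Sum>j\<le>m'. sm (of_nat (Suc m' choose Suc j) * of_nat (Suc j)) (G (Suc j)))"
    unfolding Suc by (simp only: sum.atMost_Suc_shift) simp
  also have "\<dots> = (\<Sum>j\<le>m'. sm (of_nat (Suc m') * of_nat (m' choose j)) (G (Suc j)))"
  proof (rule sum.cong[OF refl])
    fix j
    have "(of_nat (Suc m' choose Suc j) * of_nat (Suc j) :: complex) = of_nat ((Suc m' choose Suc j) * Suc j)"
      by (simp only: of_nat_mult)
    also have "\<dots> = of_nat (Suc m' * (m' choose j))" by (simp only: Suc_times_binomial_eq)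
    finally have c: "(of_nat (Suc m' choose Suc j) * of_nat (Suc j) :: complex) = of_nat (Suc m' * (m' choose j))" .
    show "sm (of_nat (Suc m' choose Suc j) * of_nat (Suc j)) (G (Suc j)) =
        sm (of_nat (Suc m') * of_nat (m' choose j)) (G (Suc j))" by (simp only: c of_nat_mult)
  qed
  also have "\<dots> = sm (of_nat m) (\<Sum>j\<le>m - 1. sm (of_nat (m - 1 choose j)) (G (Suc j)))"
    by (simp add: Suc V.scale_sum_right)
  finally show ?thesis .
qed

lemma J_DA:
  assumes h: "A \<in> CDS" "B \<in> CDS" "C \<in> CDS"
  shows "J e (Dsh A) B C m n = sm (- of_nat m) (J e A B C (m - 1) n)"
proof -
  have t1: "pr (Dsh A) m (pr B n C) = sm (- of_nat m) (pr A (m - 1) (pr B n C))"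
    using h by (simp add: pr_Dl)
  have t2: "pr B n (pr (Dsh A) m C) = sm (- of_nat m) (pr B n (pr A (m - 1) C))"
    by (simp only: pr_Dl[OF h(1) h(3)] pr_sc_r[OF h(2) pr_CDS])
  have t3: "(\<Sum>i\<le>m. sm (of_nat (m choose i)) (pr (pr (Dsh A) i B) (m + n - i) C))
     = sm (- of_nat m) (\<Sum>j\<le>m - 1. sm (of_nat (m - 1 choose j)) (pr (pr A j B) (m - 1 + n - j) C))"
  proof -
    have "(\<Sum>i\<le>m. sm (of_nat (m choose i)) (pr (pr (Dsh A) i B) (m + n - i) C))
       = - (\<Sum>i\<le>m. sm (of_nat (m choose i) * of_nat i) (pr (pr A (i - 1) B) (m + n - i) C))"
      unfolding sum_negf[symmetric]
      apply (rule sum.cong[OF refl])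
      apply (simp only: pr_Dl[OF h(1) h(2)] pr_sc_l[OF pr_CDS h(3)] V.scale_scale)
      by simp
    also have "\<dots> = - sm (of_nat m) (\<Sum>j\<le>m - 1. sm (of_nat (m - 1 choose j)) (pr (pr A j B) (m + n - Suc j) C))"
      by (simp only: binom_shift diff_Suc_1)
    also have "sm (of_nat m) (\<Sum>j\<le>m - 1. sm (of_nat (m - 1 choose j)) (pr (pr A j B) (m + n - Suc j) C))
        = sm (of_nat m) (\<Sum>j\<le>m - 1. sm (of_nat (m - 1 choose j)) (pr (pr A j B) (m - 1 + n - j) C))"
      by (cases m) simp_all
    finally show ?thesis by (simp only: V.scale_minus_left)
  qed
  show ?thesis
    unfolding J_def t1 t2 t3
    by (simp add: V.scale_right_diff_distrib V.scale_left_commute[of e])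
qed


lemma nat_coef: "i \<le> m \<Longrightarrow> (m choose i) * (m + n - i) = m * (m - 1 choose i) + n * (m choose i)"
proof -
  assume "i \<le> m"
  then have "m + n - i = (m - i) + n" by simp
  then have "(m choose i) * (m + n - i) = (m - i) * (m choose i) + n * (m choose i)"
    by (simp add: algebra_simps)
  also have "(m - i) * (m choose i) = m * (m - 1 choose i)" by (rule binomial_absorb_comp)
  finally show ?thesis .
qed

lemma sum_ext_last:
  "(\<Sum>j\<le>m - 1. sm (of_nat (m - 1 choose j)) (G j)) = (\<Sum>j\<le>m. sm (of_nat (m - 1 choose j)) (G j))"
  by (cases m) simp_all

lemma coef_lemma:
  "(\<Sum>i\<le>m. sm (of_nat (m choose i) * of_nat (m + n - i)) (Y i (m + n - 1 - i))) =
   sm (of_nat m) (\<Sum>j\<le>m - 1. sm (of_nat (m - 1 choose j)) (Y j (m - 1 + n - j)))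
   + sm (of_nat n) (\<Sum>i\<le>m. sm (of_nat (m choose i)) (Y i (m + n - 1 - i)))"
proof -
  have "sm (of_nat m) (\<Sum>j\<le>m - 1. sm (of_nat (m - 1 choose j)) (Y j (m - 1 + n - j)))
      = sm (of_nat m) (\<Sum>j\<le>m - 1. sm (of_nat (m - 1 choose j)) (Y j (m + n - 1 - j)))"
    by (cases m) simp_all
  also have "\<dots> = sm (of_nat m) (\<Sum>j\<le>m. sm (of_nat (m - 1 choose j)) (Y j (m + n - 1 - j)))"
    by (simp only: sum_ext_last)
  also have "\<dots> = (\<Sum>j\<le>m. sm (of_nat m * of_nat (m - 1 choose j)) (Y j (m + n - 1 - j)))"
    by (simp add: V.scale_sum_right)
  finally have e1: "sm (of_nat m) (\<Sum>j\<le>m - 1. sm (of_nat (m - 1 choose j)) (Y j (m - 1 + n - j))) =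
     (\<Sum>j\<le>m. sm (of_nat m * of_nat (m - 1 choose j)) (Y j (m + n - 1 - j)))" .
  have e2: "sm (of_nat n) (\<Sum>i\<le>m. sm (of_nat (m choose i)) (Y i (m + n - 1 - i))) =
     (\<Sum>i\<le>m. sm (of_nat n * of_nat (m choose i)) (Y i (m + n - 1 - i)))"
    by (simp add: V.scale_sum_right)
  show ?thesis
    unfolding e1 e2 sum.distrib[symmetric] V.scale_left_distrib[symmetric]
  proof (rule sum.cong[OF refl])
    fix i assume "i \<in> {..m}"
    then have "(m choose i) * (m + n - i) = m * (m - 1 choose i) + n * (m choose i)"
      by (simp add: nat_coef)
    then have "(of_nat (m choose i) * of_nat (m + n - i) :: complex) = of_nat m * of_nat (m - 1 choose i) + of_nat n * of_nat (m choose i)"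
      by (metis of_nat_add of_nat_mult)
    then show "sm (of_nat (m choose i) * of_nat (m + n - i)) (Y i (m + n - 1 - i)) =
      sm (of_nat m * of_nat (m - 1 choose i) + of_nat n * of_nat (m choose i)) (Y i (m + n - 1 - i))"
      by (simp only:)
  qed
qed

lemma pr_DB_r: "A \<in> CDS \<Longrightarrow> B \<in> CDS \<Longrightarrow>
  pr A n (Dsh B) = Dsh (pr A n B) + sm (of_nat n) (pr A (n - 1) B)"
  by (simp add: pr_Leib pr_Dl)

lemma pr_Y_DB:
  assumes h: "A \<in> CDS" "B \<in> CDS" "C \<in> CDS"
  shows "pr (pr A i (Dsh B)) k C = sm (- of_nat k) (pr (pr A i B) (k - 1) C) + sm (of_nat i) (pr (pr A (i - 1) B) k C)"
  by (simp only: pr_DB_r[OF h(1,2)] pr_add_l[OF CDS_Dsh[OF pr_CDS] CDS_scale[OF pr_CDS] h(3)]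
      pr_Dl[OF pr_CDS h(3)] pr_sc_l[OF pr_CDS h(3)])

lemma J_DB:
  assumes h: "A \<in> CDS" "B \<in> CDS" "C \<in> CDS"
  shows "J e A (Dsh B) C m n = sm (- of_nat n) (J e A B C m (n - 1))"
proof -
  let ?Y = "\<lambda>i k. pr (pr A i B) k C"
  have p1: "pr A m (pr (Dsh B) n C) = sm (- of_nat n) (pr A m (pr B (n - 1) C))"
    by (simp only: pr_Dl[OF h(2) h(3)] pr_sc_r[OF h(1) pr_CDS])
  have p2: "pr (Dsh B) n (pr A m C) = sm (- of_nat n) (pr B (n - 1) (pr A m C))"
    by (simp only: pr_Dl[OF h(2) pr_CDS])
  have p3: "(\<Sum>i\<le>m. sm (of_nat (m choose i)) (pr (pr A i (Dsh B)) (m + n - i) C))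
      = sm (- of_nat n) (\<Sum>i\<le>m. sm (of_nat (m choose i)) (?Y i (m + n - 1 - i)))"
  proof -
    have "(\<Sum>i\<le>m. sm (of_nat (m choose i)) (pr (pr A i (Dsh B)) (m + n - i) C))
      = (\<Sum>i\<le>m. sm (- (of_nat (m choose i) * of_nat (m + n - i))) (?Y i (m + n - 1 - i)))
        + (\<Sum>i\<le>m. sm (of_nat (m choose i) * of_nat i) (?Y (i - 1) (m + n - i)))"
      unfolding sum.distrib[symmetric]
      by (rule sum.cong[OF refl]) (simp only: pr_Y_DB[OF h] V.scale_right_distrib V.scale_scale mult_minus_right diff_commute)
    also have "\<dots> = - (\<Sum>i\<le>m. sm (of_nat (m choose i) * of_nat (m + n - i)) (?Y i (m + n - 1 - i)))
        + sm (of_nat m) (\<Sum>j\<le>m - 1. sm (of_nat (m - 1 choose j)) (?Y j (m - 1 + n - j)))"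
    proof -
      have "(\<Sum>i\<le>m. sm (of_nat (m choose i) * of_nat i) (?Y (i - 1) (m + n - i)))
          = sm (of_nat m) (\<Sum>j\<le>m - 1. sm (of_nat (m - 1 choose j)) (?Y j (m + n - Suc j)))"
        by (simp only: binom_shift diff_Suc_1)
      also have "\<dots> = sm (of_nat m) (\<Sum>j\<le>m - 1. sm (of_nat (m - 1 choose j)) (?Y j (m - 1 + n - j)))"
        by (cases m) simp_all
      finally show ?thesis by (simp only: V.scale_minus_left sum_negf)
    qed
    also have "\<dots> = - sm (of_nat n) (\<Sum>i\<le>m. sm (of_nat (m choose i)) (?Y i (m + n - 1 - i)))"
      by (simp only: coef_lemma[of m n ?Y]) (rule neg_cancel_aux)
    finally show ?thesis by (simp only: V.scale_minus_left)
  qed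
  have p4: "sm (- of_nat n) (\<Sum>i\<le>m. sm (of_nat (m choose i)) (?Y i (m + n - 1 - i)))
     = sm (- of_nat n) (\<Sum>i\<le>m. sm (of_nat (m choose i)) (?Y i (m + (n - 1) - i)))"
    by (cases n) simp_all
  show ?thesis
    unfolding J_def p1 p2 p3 p4 by (rule V.lin_neg)
qed


lemma J_DC:
  assumes h: "A \<in> CDS" "B \<in> CDS" "C \<in> CDS"
  shows "J e A B (Dsh C) m n = Dsh (J e A B C m n) + sm (of_nat m) (J e A B C (m - 1) n)
     + sm (of_nat n) (J e A B C m (n - 1))"
proof -
  let ?Y = "\<lambda>i k. pr (pr A i B) k C"
  have q1: "pr A m (pr B n (Dsh C)) = Dsh (pr A m (pr B n C)) + sm (of_nat m) (pr A (m - 1) (pr B n C))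
      + sm (of_nat n) (pr A m (pr B (n - 1) C))"
    by (simp only: pr_DB_r[OF h(2,3)] pr_add_r[OF h(1) CDS_Dsh[OF pr_CDS] CDS_scale[OF pr_CDS]]
        pr_DB_r[OF h(1) pr_CDS] pr_sc_r[OF h(1) pr_CDS])
  have q2: "pr B n (pr A m (Dsh C)) = Dsh (pr B n (pr A m C)) + sm (of_nat n) (pr B (n - 1) (pr A m C))
      + sm (of_nat m) (pr B n (pr A (m - 1) C))"
    by (simp only: pr_DB_r[OF h(1,3)] pr_add_r[OF h(2) CDS_Dsh[OF pr_CDS] CDS_scale[OF pr_CDS]]
        pr_DB_r[OF h(2) pr_CDS] pr_sc_r[OF h(2) pr_CDS])
  have q3: "(\<Sum>i\<le>m. sm (of_nat (m choose i)) (pr (pr A i B) (m + n - i) (Dsh C)))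
     = Dsh (\<Sum>i\<le>m. sm (of_nat (m choose i)) (?Y i (m + n - i)))
       + sm (of_nat m) (\<Sum>j\<le>m - 1. sm (of_nat (m - 1 choose j)) (?Y j (m - 1 + n - j)))
       + sm (of_nat n) (\<Sum>i\<le>m. sm (of_nat (m choose i)) (?Y i (m + n - 1 - i)))"
  proof -
    have "(\<Sum>i\<le>m. sm (of_nat (m choose i)) (pr (pr A i B) (m + n - i) (Dsh C)))
      = (\<Sum>i\<le>m. Dsh (sm (of_nat (m choose i)) (?Y i (m + n - i))))
        + (\<Sum>i\<le>m. sm (of_nat (m choose i) * of_nat (m + n - i)) (?Y i (m + n - 1 - i)))"
      unfolding sum.distrib[symmetric]
      by (rule sum.cong[OF refl]) (simp only: pr_DB_r[OF pr_CDS h(3)] V.scale_right_distrib V.scale_scale Dsh_scale diff_commute)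
    also have "\<dots> = Dsh (\<Sum>i\<le>m. sm (of_nat (m choose i)) (?Y i (m + n - i)))
       + (sm (of_nat m) (\<Sum>j\<le>m - 1. sm (of_nat (m - 1 choose j)) (?Y j (m - 1 + n - j)))
       + sm (of_nat n) (\<Sum>i\<le>m. sm (of_nat (m choose i)) (?Y i (m + n - 1 - i))))"
      by (simp only: coef_lemma[of m n ?Y] Dsh_sum)
    finally show ?thesis by (simp only: add.assoc)
  qed
  have q4: "sm (of_nat n) (\<Sum>i\<le>m. sm (of_nat (m choose i)) (?Y i (m + n - 1 - i)))
     = sm (of_nat n) (\<Sum>i\<le>m. sm (of_nat (m choose i)) (?Y i (m + (n - 1) - i)))"
    by (cases n) simp_all
  have q5: "Dsh (J e A B C m n) = Dsh (pr A m (pr B n C)) - sm e (Dsh (pr B n (pr A m C)))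
      - Dsh (\<Sum>i\<le>m. sm (of_nat (m choose i)) (?Y i (m + n - i)))"
    unfolding J_def by (simp only: Dsh_diff Dsh_scale)
  show ?thesis
    unfolding q5 J_def[of e A B "Dsh C"] q1 q2 q3 q4 V.lin3
    unfolding J_def ..
qed


lemma J_add_A:
  assumes h: "A \<in> CDS" "A' \<in> CDS" "B \<in> CDS" "C \<in> CDS"
  shows "J e (A + A') B C m n = J e A B C m n + J e A' B C m n"
proof -
  have s: "(\<Sum>i\<le>m. sm (of_nat (m choose i)) (pr (pr (A + A') i B) (m + n - i) C)) =
    (\<Sum>i\<le>m. sm (of_nat (m choose i)) (pr (pr A i B) (m + n - i) C)) +
    (\<Sum>i\<le>m. sm (of_nat (m choose i)) (pr (pr A' i B) (m + n - i) C))"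
    unfolding sum.distrib[symmetric]
    by (rule sum.cong[OF refl]) (simp only: pr_add_l[OF h(1,2,3)] pr_add_l[OF pr_CDS pr_CDS h(4)] V.scale_right_distrib)
  show ?thesis
    unfolding J_def s
    by (simp only: pr_add_l[OF h(1,2) pr_CDS] pr_add_l[OF h(1,2,4)] pr_add_r[OF h(3) pr_CDS pr_CDS] V.lin_add)
qed

lemma J_add_B:
  assumes h: "A \<in> CDS" "B \<in> CDS" "B' \<in> CDS" "C \<in> CDS"
  shows "J e A (B + B') C m n = J e A B C m n + J e A B' C m n"
proof -
  have s: "(\<Sum>i\<le>m. sm (of_nat (m choose i)) (pr (pr A i (B + B')) (m + n - i) C)) =
    (\<Sum>i\<le>m. sm (of_nat (m choose i)) (pr (pr A i B) (m + n - i) C)) +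
    (\<Sum>i\<le>m. sm (of_nat (m choose i)) (pr (pr A i B') (m + n - i) C))"
    unfolding sum.distrib[symmetric]
    by (rule sum.cong[OF refl]) (simp only: pr_add_r[OF h(1,2,3)] pr_add_l[OF pr_CDS pr_CDS h(4)] V.scale_right_distrib)
  show ?thesis
    unfolding J_def s
    by (simp only: pr_add_l[OF h(2,3) pr_CDS] pr_add_l[OF h(2,3,4)] pr_add_r[OF h(1) pr_CDS pr_CDS] V.lin_add)
qed

lemma J_add_C:
  assumes h: "A \<in> CDS" "B \<in> CDS" "C \<in> CDS" "C' \<in> CDS"
  shows "J e A B (C + C') m n = J e A B C m n + J e A B C' m n"
proof -
  have s: "(\<Sum>i\<le>m. sm (of_nat (m choose i)) (pr (pr A i B) (m + n - i) (C + C'))) =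
    (\<Sum>i\<le>m. sm (of_nat (m choose i)) (pr (pr A i B) (m + n - i) C)) +
    (\<Sum>i\<le>m. sm (of_nat (m choose i)) (pr (pr A i B) (m + n - i) C'))"
    unfolding sum.distrib[symmetric]
    by (rule sum.cong[OF refl]) (simp only: pr_add_r[OF pr_CDS h(3,4)] V.scale_right_distrib)
  show ?thesis
    unfolding J_def s
    by (simp only: pr_add_r[OF h(2,3,4)] pr_add_r[OF h(1,3,4)] pr_add_r[OF h(1) pr_CDS pr_CDS]
        pr_add_r[OF h(2) pr_CDS pr_CDS] V.lin_add)
qed

lemma J_zero_A: "J e 0 B C m n = 0" by (simp add: J_def)
lemma J_zero_B: "J e A 0 C m n = 0" by (simp add: J_def)
lemma J_zero_C: "J e A B 0 m n = 0" by (simp add: J_def)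

lemma J_sum_A: "finite T \<Longrightarrow> (\<And>a. a \<in> T \<Longrightarrow> X a \<in> CDS) \<Longrightarrow> B \<in> CDS \<Longrightarrow> C \<in> CDS \<Longrightarrow>
   J e (\<Sum>a\<in>T. X a) B C m n = (\<Sum>a\<in>T. J e (X a) B C m n)"
proof (induction T rule: finite_induct)
  case empty
  then show ?case by (simp only: sum.empty J_zero_A)
next
  case (insert x T)
  have "X x \<in> CDS" "(\<Sum>a\<in>T. X a) \<in> CDS" using insert by auto
  moreover have "J e (\<Sum>a\<in>T. X a) B C m n = (\<Sum>a\<in>T. J e (X a) B C m n)"
    by (rule insert.IH) (use insert.prems in auto)
  ultimately show ?case by (simp only: sum.insert[OF insert(1,2)] J_add_A[OF _ _ insert.prems(2,3)])
qed

lemma J_sum_B: "finite T \<Longrightarrow> (\<And>a. a \<in> T \<Longrightarrow> X a \<in> CDS) \<Longrightarrow> A \<in> CDS \<Longrightarrow> C \<in> CDS \<Longrightarrow>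
   J e A (\<Sum>a\<in>T. X a) C m n = (\<Sum>a\<in>T. J e A (X a) C m n)"
proof (induction T rule: finite_induct)
  case empty
  then show ?case by (simp only: sum.empty J_zero_B)
next
  case (insert x T)
  have "X x \<in> CDS" "(\<Sum>a\<in>T. X a) \<in> CDS" using insert by auto
  moreover have "J e A (\<Sum>a\<in>T. X a) C m n = (\<Sum>a\<in>T. J e A (X a) C m n)"
    by (rule insert.IH) (use insert.prems in auto)
  ultimately show ?case by (simp only: sum.insert[OF insert(1,2)] J_add_B[OF insert.prems(2) _ _ insert.prems(3)])
qed

lemma J_sum_C: "finite T \<Longrightarrow> (\<And>a. a \<in> T \<Longrightarrow> X a \<in> CDS) \<Longrightarrow> A \<in> CDS \<Longrightarrow> B \<in> CDS \<Longrightarrow>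
   J e A B (\<Sum>a\<in>T. X a) m n = (\<Sum>a\<in>T. J e A B (X a) m n)"
proof (induction T rule: finite_induct)
  case empty
  then show ?case by (simp only: sum.empty J_zero_C)
next
  case (insert x T)
  have "X x \<in> CDS" "(\<Sum>a\<in>T. X a) \<in> CDS" using insert by auto
  moreover have "J e A B (\<Sum>a\<in>T. X a) m n = (\<Sum>a\<in>T. J e A B (X a) m n)"
    by (rule insert.IH) (use insert.prems in auto)
  ultimately show ?case by (simp only: sum.insert[OF insert(1,2)] J_add_C[OF insert.prems(2,3) _ _])
qed

lemma decomp: "A \<in> CDS \<Longrightarrow> A = (\<Sum>a\<in>supp A. Dpow a (incl (A a)))"
proof -
  assume h: "A \<in> CDS"
  show ?thesis
  proof (rule ext)
    fix j
    have "(\<Sum>a\<in>supp A. Dpow a (incl (A a))) j = (\<Sum>a\<in>supp A. if j = a then A a else 0)"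
      by (simp add: sum_fun_apply Dpow_incl)
    also have "\<dots> = A j" using CDS_fin[OF h] by (simp add: sum.delta)
    finally show "A j = (\<Sum>a\<in>supp A. Dpow a (incl (A a))) j" by simp
  qed
qed

lemma J_ind_A: "(\<forall>m n. J e A B C m n = 0) \<Longrightarrow> A \<in> CDS \<Longrightarrow> B \<in> CDS \<Longrightarrow> C \<in> CDS \<Longrightarrow>
  J e (Dpow k A) B C m n = 0"
proof (induction k arbitrary: m n)
  case 0
  then show ?case by simp
next
  case (Suc k)
  have "J e (Dpow (Suc k) A) B C m n = sm (- of_nat m) (J e (Dpow k A) B C (m - 1) n)"
    by (simp only: Dpow_Suc J_DA[OF CDS_Dpow[OF Suc.prems(2)] Suc.prems(3,4)])
  then show ?case by (simp only: Suc.IH[OF Suc.prems] V.scale_zero_right)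
qed

lemma J_ind_B: "(\<forall>m n. J e A B C m n = 0) \<Longrightarrow> A \<in> CDS \<Longrightarrow> B \<in> CDS \<Longrightarrow> C \<in> CDS \<Longrightarrow>
  J e A (Dpow k B) C m n = 0"
proof (induction k arbitrary: m n)
  case 0
  then show ?case by simp
next
  case (Suc k)
  have "J e A (Dpow (Suc k) B) C m n = sm (- of_nat n) (J e A (Dpow k B) C m (n - 1))"
    by (simp only: Dpow_Suc J_DB[OF Suc.prems(2) CDS_Dpow[OF Suc.prems(3)] Suc.prems(4)])
  then show ?case by (simp only: Suc.IH[OF Suc.prems] V.scale_zero_right)
qed

lemma J_ind_C: "(\<forall>m n. J e A B C m n = 0) \<Longrightarrow> A \<in> CDS \<Longrightarrow> B \<in> CDS \<Longrightarrow> C \<in> CDS \<Longrightarrow>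
  J e A B (Dpow k C) m n = 0"
proof (induction k arbitrary: m n)
  case 0
  then show ?case by simp
next
  case (Suc k)
  have "J e A B (Dpow (Suc k) C) m n = Dsh (J e A B (Dpow k C) m n) + sm (of_nat m) (J e A B (Dpow k C) (m - 1) n)
     + sm (of_nat n) (J e A B (Dpow k C) m (n - 1))"
    by (simp only: Dpow_Suc J_DC[OF Suc.prems(2,3) CDS_Dpow[OF Suc.prems(4)]])
  then show ?case by (simp only: Suc.IH[OF Suc.prems] V.scale_zero_right Dsh_zero add_0_right)
qed

lemma J_basis: "(\<forall>m n. J e (incl u) (incl v) (incl w) m n = 0) \<Longrightarrow>
  J e (Dpow a (incl u)) (Dpow b (incl v)) (Dpow c (incl w)) m n = 0"
proof -
  assume H: "\<forall>m n. J e (incl u) (incl v) (incl w) m n = 0"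
  have 1: "\<forall>m n. J e (incl u) (incl v) (Dpow c (incl w)) m n = 0"
    using J_ind_C[OF H CDS_incl CDS_incl CDS_incl] by blast
  have 2: "\<forall>m n. J e (incl u) (Dpow b (incl v)) (Dpow c (incl w)) m n = 0"
    using J_ind_B[OF 1 CDS_incl CDS_incl CDS_Dpow[OF CDS_incl]] by blast
  show ?thesis using J_ind_A[OF 2 CDS_incl CDS_Dpow[OF CDS_incl] CDS_Dpow[OF CDS_incl]] .
qed

lemma J_hom:
  assumes H: "\<forall>u\<in>Spar p. \<forall>v\<in>Spar q. \<forall>w\<in>Spar r. \<forall>m n. J e (incl u) (incl v) (incl w) m n = 0"
    and hA: "A \<in> CDpar Spar p" and hB: "B \<in> CDpar Spar q" and hC: "C \<in> CDpar Spar r"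
  shows "J e A B C m n = 0"
proof -
  have c: "A \<in> CDS" "B \<in> CDS" "C \<in> CDS" using hA hB hC by (auto simp: CDpar_def)
  have f: "finite (supp A)" "finite (supp B)" "finite (supp C)" using c by (auto simp: CDS_fin)
  let ?A = "\<lambda>a. Dpow a (incl (A a))"
  let ?B = "\<lambda>a. Dpow a (incl (B a))"
  let ?C = "\<lambda>a. Dpow a (incl (C a))"
  have sA: "(\<Sum>a\<in>supp A. ?A a) \<in> CDS" and sB: "(\<Sum>a\<in>supp B. ?B a) \<in> CDS"
    and sC: "(\<Sum>a\<in>supp C. ?C a) \<in> CDS" by (auto intro!: CDS_sum)
  have "J e (\<Sum>a\<in>supp A. ?A a) (\<Sum>b\<in>supp B. ?B b) (\<Sum>c\<in>supp C. ?C c) m n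
     = (\<Sum>a\<in>supp A. J e (?A a) (\<Sum>b\<in>supp B. ?B b) (\<Sum>c\<in>supp C. ?C c) m n)"
    by (rule J_sum_A[OF f(1) _ sB sC]) simp
  also have "\<dots> = 0"
  proof (rule sum.neutral, rule ballI)
    fix a assume a: "a \<in> supp A"
    have "J e (?A a) (\<Sum>b\<in>supp B. ?B b) (\<Sum>c\<in>supp C. ?C c) m n
       = (\<Sum>b\<in>supp B. J e (?A a) (?B b) (\<Sum>c\<in>supp C. ?C c) m n)"
      by (rule J_sum_B[OF f(2) _ _ sC]) simp_all
    also have "\<dots> = 0"
    proof (rule sum.neutral, rule ballI)
      fix b assume b: "b \<in> supp B"
      have "J e (?A a) (?B b) (\<Sum>c\<in>supp C. ?C c) m n
         = (\<Sum>c\<in>supp C. J e (?A a) (?B b) (?C c) m n)"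
        by (rule J_sum_C[OF f(3)]) simp_all
      also have "\<dots> = 0"
      proof (rule sum.neutral, rule ballI)
        fix c assume "c \<in> supp C"
        have "A a \<in> Spar p" "B b \<in> Spar q" "C c \<in> Spar r" using hA hB hC by (auto simp: CDpar_def)
        then have "\<forall>m n. J e (incl (A a)) (incl (B b)) (incl (C c)) m n = 0" using H by blast
        then show "J e (?A a) (?B b) (?C c) m n = 0" by (rule J_basis)
      qed
      finally show "J e (?A a) (?B b) (\<Sum>c\<in>supp C. ?C c) m n = 0" .
    qed
    finally show "J e (?A a) (\<Sum>b\<in>supp B. ?B b) (\<Sum>c\<in>supp C. ?C c) m n = 0" .
  qed
  finally have R: "J e (\<Sum>a\<in>supp A. ?A a) (\<Sum>b\<in>supp B. ?B b) (\<Sum>c\<in>supp C. ?C c) m n = 0" .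
  show ?thesis using R by (simp only: decomp[OF c(1), symmetric] decomp[OF c(2), symmetric] decomp[OF c(3), symmetric])
qed


lemma dec_CDS: "x \<in> CDS \<Longrightarrow> \<exists>a\<in>CDpar Spar False. \<exists>b\<in>CDpar Spar True. x = a + b"
proof -
  assume x: "x \<in> CDS"
  define a where "a = (\<lambda>k. if x k = 0 then 0 else (SOME a. a \<in> Spar False \<and> (\<exists>b\<in>Spar True. x k = a + b)))"
  define b where "b = (\<lambda>k. x k - a k)"
  have ab: "a k \<in> Spar False \<and> b k \<in> Spar True" for k
  proof (cases "x k = 0")
    case True
    then show ?thesis by (simp add: a_def b_def Spar0)
  next
    case False
    have "\<exists>a. a \<in> Spar False \<and> (\<exists>b\<in>Spar True. x k = a + b)" using Spar_dec[of "x k"] by blast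
    then have "a k \<in> Spar False \<and> (\<exists>b\<in>Spar True. x k = a k + b)"
      unfolding a_def using False by (simp only: if_False) (rule someI_ex)
    then show ?thesis unfolding b_def by (auto simp: algebra_simps)
  qed
  have fa: "supp a \<subseteq> supp x" by (auto simp: a_def)
  have fb: "supp b \<subseteq> supp x" by (auto simp: b_def a_def)
  have "a \<in> CDpar Spar False" using ab fa CDS_fin[OF x] by (auto simp: CDpar_def CDS_def intro: finite_subset)
  moreover have "b \<in> CDpar Spar True" using ab fb CDS_fin[OF x] by (auto simp: CDpar_def CDS_def intro: finite_subset)
  moreover have "x = a + b" by (simp add: b_def fun_eq_iff)
  ultimately show ?thesis by blast
qed

lemma graded_CDS: "graded_space (fscale sc) CDS (CDpar Spar)"
proof -
  have sub: "V.subspace CDS" unfolding V.subspace_def by simp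
  have subp: "V.subspace (CDpar Spar p)" for p unfolding V.subspace_def by simp
  have int: "CDpar Spar False \<inter> CDpar Spar True = {0}"
  proof
    show "CDpar Spar False \<inter> CDpar Spar True \<subseteq> {0}"
    proof
      fix f assume "f \<in> CDpar Spar False \<inter> CDpar Spar True"
      then have "f k \<in> Spar False \<inter> Spar True" for k by (auto simp: CDpar_def)
      then have "f k = 0" for k using Spar_int by blast
      then show "f \<in> {0}" by (simp add: fun_eq_iff)
    qed
  qed simp
  show ?thesis unfolding graded_space_def
    using vsV sub subp int dec_CDS by (auto simp: CDpar_def)
qed

end

theorem prop_main:
  fixes sc :: "complex \<Rightarrow> 'a::ab_group_add \<Rightarrow> 'a"
    and Spar :: "bool \<Rightarrow> 'a set"
    and F :: "nat \<Rightarrow> 'a \<Rightarrow> 'a \<Rightarrow> nat \<Rightarrow> 'a"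
  assumes "is_formula sc Spar F"
  shows "VLA_SS (fscale sc) CDS (CDpar Spar) Dsh (ext_prod sc F) \<longleftrightarrow>
    (\<forall>p q r. \<forall>u\<in>Spar p. \<forall>v\<in>Spar q. \<forall>w\<in>Spar r. \<forall>m n.
       ext_prod sc F (incl u) m (ext_prod sc F (incl v) n (incl w))
       - fscale sc (eps p q) (ext_prod sc F (incl v) n (ext_prod sc F (incl u) m (incl w)))
       = (\<Sum>i\<le>m. fscale sc (of_nat (m choose i))
            (ext_prod sc F (ext_prod sc F (incl u) i (incl v)) (m + n - i) (incl w))))"
proof -
  interpret fml sc Spar F by (rule fml.intro) (rule assms)
  show ?thesis
  proof
    assume VLA: "VLA_SS (fscale sc) CDS (CDpar Spar) Dsh (ext_prod sc F)"
    show "\<forall>p q r. \<forall>u\<in>Spar p. \<forall>v\<in>Spar q. \<forall>w\<in>Spar r. \<forall>m n.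
       ext_prod sc F (incl u) m (ext_prod sc F (incl v) n (incl w))
       - fscale sc (eps p q) (ext_prod sc F (incl v) n (ext_prod sc F (incl u) m (incl w)))
       = (\<Sum>i\<le>m. fscale sc (of_nat (m choose i))
            (ext_prod sc F (ext_prod sc F (incl u) i (incl v)) (m + n - i) (incl w)))"
    proof (intro allI ballI)
      fix p q r u v w m n
      assume u: "u \<in> Spar p" and v: "v \<in> Spar q" and w: "w \<in> Spar r"
      have jac: "\<forall>k m n.
           (\<Sum>i\<le>k. fscale sc ((-1) ^ i * of_nat (k choose i))
              (ext_prod sc F (incl u) (m + k - i) (ext_prod sc F (incl v) (n + i) (incl w))
               - fscale sc (eps p q * (-1) ^ k) (ext_prod sc F (incl v) (n + k - i) (ext_prod sc F (incl u) (m + i) (incl w)))))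
           = (\<Sum>i\<le>m. fscale sc (of_nat (m choose i)) (ext_prod sc F (ext_prod sc F (incl u) (k + i) (incl v)) (m + n - i) (incl w)))"
        using VLA CDpar_incl[OF u] CDpar_incl[OF v] CDpar_incl[OF w] unfolding VLA_SS_def by blast
      then have "(\<Sum>i\<le>0. fscale sc ((-1) ^ i * of_nat (0 choose i))
              (ext_prod sc F (incl u) (m + 0 - i) (ext_prod sc F (incl v) (n + i) (incl w))
               - fscale sc (eps p q * (-1) ^ 0) (ext_prod sc F (incl v) (n + 0 - i) (ext_prod sc F (incl u) (m + i) (incl w)))))
           = (\<Sum>i\<le>m. fscale sc (of_nat (m choose i)) (ext_prod sc F (ext_prod sc F (incl u) (0 + i) (incl v)) (m + n - i) (incl w)))"
        by blast
      then show "ext_prod sc F (incl u) m (ext_prod sc F (incl v) n (incl w))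
       - fscale sc (eps p q) (ext_prod sc F (incl v) n (ext_prod sc F (incl u) m (incl w)))
       = (\<Sum>i\<le>m. fscale sc (of_nat (m choose i))
            (ext_prod sc F (ext_prod sc F (incl u) i (incl v)) (m + n - i) (incl w)))"
        by (simp only: atMost_0 sum.insert_if sum.empty finite.emptyI empty_iff if_False
            power_0 binomial_n_0 of_nat_1 mult_1_right mult_1_left V.scale_one add_0_right add_0_left diff_zero)
    qed
  next
    assume C: "\<forall>p q r. \<forall>u\<in>Spar p. \<forall>v\<in>Spar q. \<forall>w\<in>Spar r. \<forall>m n.
       ext_prod sc F (incl u) m (ext_prod sc F (incl v) n (incl w))
       - fscale sc (eps p q) (ext_prod sc F (incl v) n (ext_prod sc F (incl u) m (incl w)))
       = (\<Sum>i\<le>m. fscale sc (of_nat (m choose i))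
            (ext_prod sc F (ext_prod sc F (incl u) i (incl v)) (m + n - i) (incl w)))"
    have C': "\<forall>u\<in>Spar p. \<forall>v\<in>Spar q. \<forall>w\<in>Spar r. \<forall>m n. J (eps p q) (incl u) (incl v) (incl w) m n = 0" for p q r
      using C unfolding J_def by (simp only: diff_eq_eq add_0_left) blast
    have HJ: "(\<Sum>i\<le>k. fscale sc ((-1) ^ i * of_nat (k choose i))
              (ext_prod sc F A (m + k - i) (ext_prod sc F B (n + i) C)
               - fscale sc (eps p q * (-1) ^ k) (ext_prod sc F B (n + k - i) (ext_prod sc F A (m + i) C))))
           = (\<Sum>i\<le>m. fscale sc (of_nat (m choose i)) (ext_prod sc F (ext_prod sc F A (k + i) B) (m + n - i) C))"
      if hA: "A \<in> CDpar Spar p" and hB: "B \<in> CDpar Spar q" and hC: "C \<in> CDpar Spar r" for p q r A B C k m n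
    proof -
      have J0: "J (eps p q) A B C m n = 0" for m n by (rule J_hom[OF C' hA hB hC])
      have "VV.LL (eps p q) (\<lambda>m n. ext_prod sc F A m (ext_prod sc F B n C)) (\<lambda>n m. ext_prod sc F B n (ext_prod sc F A m C)) k m n
          = VV.RR (\<lambda>k j. ext_prod sc F (ext_prod sc F A k B) j C) k m n"
      proof (rule VV.half_jacobi_gen, intro allI)
        fix m n
        show "ext_prod sc F A m (ext_prod sc F B n C) - fscale sc (eps p q) (ext_prod sc F B n (ext_prod sc F A m C)) = VV.RR (\<lambda>k j. ext_prod sc F (ext_prod sc F A k B) j C) 0 m n"
          using J0[of m n] unfolding J_def VV.RR_def by (simp only: diff_eq_eq add_0_left)
      qed
      then show ?thesis unfolding VV.LL_def VV.RR_def .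
    qed
    show "VLA_SS (fscale sc) CDS (CDpar Spar) Dsh (ext_prod sc F)"
      unfolding VLA_SS_def
    proof (intro conjI allI ballI)
      show "graded_space (fscale sc) CDS (CDpar Spar)" by (rule graded_CDS)
    next
      fix x y :: "nat \<Rightarrow> 'a" show "Dsh (x + y) = Dsh x + Dsh y" by simp
    next
      fix c and x :: "nat \<Rightarrow> 'a" show "Dsh (fscale sc c x) = fscale sc c (Dsh x)" by simp
    next
      fix p and x :: "nat \<Rightarrow> 'a" assume "x \<in> CDpar Spar p" then show "Dsh x \<in> CDpar Spar p" by simp
    next
      fix n x y show "ext_prod sc F x n y \<in> CDS" by simp
    next
      fix n and x x' y :: "nat \<Rightarrow> 'a" assume "x \<in> CDS" "x' \<in> CDS" "y \<in> CDS"
      then show "ext_prod sc F (x + x') n y = ext_prod sc F x n y + ext_prod sc F x' n y" by (rule pr_add_l)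
    next
      fix n and x y y' :: "nat \<Rightarrow> 'a" assume "x \<in> CDS" "y \<in> CDS" "y' \<in> CDS"
      then show "ext_prod sc F x n (y + y') = ext_prod sc F x n y + ext_prod sc F x n y'" by (rule pr_add_r)
    next
      fix n c and x y :: "nat \<Rightarrow> 'a" assume "x \<in> CDS" "y \<in> CDS"
      then show "ext_prod sc F (fscale sc c x) n y = fscale sc c (ext_prod sc F x n y)" by (rule pr_sc_l)
    next
      fix n c and x y :: "nat \<Rightarrow> 'a" assume "x \<in> CDS" "y \<in> CDS"
      then show "ext_prod sc F x n (fscale sc c y) = fscale sc c (ext_prod sc F x n y)" by (rule pr_sc_r)
    next
      fix p q r and u v w :: "nat \<Rightarrow> 'a" assume u: "u \<in> CDpar Spar p" and v: "v \<in> CDpar Spar q" and w: "w \<in> CDpar Spar r"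
      have uc: "u \<in> CDS" and vc: "v \<in> CDS" using u v by (auto simp: CDpar_def)
      show "\<exists>N. \<forall>n\<ge>N. ext_prod sc F u n v = 0" by (rule pr_van[OF uc vc])
      { fix n show "ext_prod sc F u n v \<in> CDpar Spar (p \<noteq> q)" by (rule pr_par[OF u v]) }
      { fix n show "ext_prod sc F (Dsh u) n v = fscale sc (- of_nat n) (ext_prod sc F u (n - 1) v)" by (rule pr_Dl[OF uc vc]) }
      { fix n show "Dsh (ext_prod sc F u n v) = ext_prod sc F (Dsh u) n v + ext_prod sc F u n (Dsh v)" by (rule pr_Leib[OF uc vc]) }
      { fix k m n show "(\<Sum>i\<le>k. fscale sc ((-1) ^ i * of_nat (k choose i))
              (ext_prod sc F u (m + k - i) (ext_prod sc F v (n + i) w)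
               - fscale sc (eps p q * (-1) ^ k) (ext_prod sc F v (n + k - i) (ext_prod sc F u (m + i) w))))
           = (\<Sum>i\<le>m. fscale sc (of_nat (m choose i)) (ext_prod sc F (ext_prod sc F u (k + i) v) (m + n - i) w))"
          by (rule HJ[OF u v w]) }
    qed
  qed
qed

theorem proposition7p7:
  fixes sc :: "complex \<Rightarrow> 'a::ab_group_add \<Rightarrow> 'a"
    and Spar :: "bool \<Rightarrow> 'a set"
    and F :: "nat \<Rightarrow> 'a \<Rightarrow> 'a \<Rightarrow> nat \<Rightarrow> 'a"
  assumes "is_formula sc Spar F"
  shows "VLA_SS (fscale sc) CDS (CDpar Spar) Dsh (ext_prod sc F) \<longleftrightarrow>
    (\<forall>p q r. \<forall>u\<in>Spar p. \<forall>v\<in>Spar q. \<forall>w\<in>Spar r. \<forall>m n.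
       ext_prod sc F (incl u) m (ext_prod sc F (incl v) n (incl w))
       - fscale sc (eps p q) (ext_prod sc F (incl v) n (ext_prod sc F (incl u) m (incl w)))
       = (\<Sum>i\<le>m. fscale sc (of_nat (m choose i))
            (ext_prod sc F (ext_prod sc F (incl u) i (incl v)) (m + n - i) (incl w))))"
  using assms by (rule prop_main)

end
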